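(* Let $\kappa$ be an infinite cardinal and $B$ a partially ordered structure. If the ordinal $\kappa^++1$ (with its natural order) or its reverse order $(\kappa^++1)^*$ is order-isomorphically embeddable into $B$, then $B$ does not have the $\kappa$-FN. In particular, every Boolean algebra $B$ with the $\kappa$-FN satisfies $\mathrm{Depth}(B)\le\kappa$.
   Context: A partially ordered structure is a structure (in some fixed signature) together with a distinguished partial order $\le$ on its universe. For an infinite cardinal $\kappa$, $B$ has the $\kappa$-Freese–Nation property ($\kappa$-FN) if there is a map $f:B\to[B]^{<\kappa}$ such that for all $a,b\in B$ with $a\le b$ there is $c\in f(a)\cap f(b)$ with $a\le c\le b$. For a Boolean algebra $B$, $\mathrm{Depth}(B)$ is the supremum of the cardinalities of subsets of $B$ well-ordered by the Boolean order. *)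

theory Defs
  imports Main
begin

text \<open>Cardinals are represented, as in the BNF cardinal library of Main, by cardinal
order relations \<open>k :: 'k rel\<close> with \<open>Card_order k\<close>; the successor cardinal is
\<open>cardSuc k\<close>.  A partially ordered structure is a carrier \<open>A\<close> with a partial order
\<open>r\<close> on it (the rest of the signature is irrelevant).\<close>

definition FN :: "'k rel \<Rightarrow> 'a set \<Rightarrow> 'a rel \<Rightarrow> bool" where
  "FN k A r \<longleftrightarrow>
     (\<exists>f :: 'a \<Rightarrow> 'a set.
        (\<forall>a\<in>A. f a \<subseteq> A \<and> (card_of (f a), k) \<in> ordLess) \<and>
        (\<forall>a\<in>A. \<forall>b\<in>A. (a, b) \<in> r \<longrightarrow>
            (\<exists>c \<in> f a \<inter> f b. (a, c) \<in> r \<and> (c, b) \<in> r)))"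

definition plus_one :: "'k rel \<Rightarrow> 'k option rel" where
  "plus_one s = {(Some x, Some y) | x y. (x, y) \<in> s}
              \<union> {(Some x, None) | x. x \<in> Field s} \<union> {(None, None)}"

definition order_embeds :: "'b rel \<Rightarrow> 'a set \<Rightarrow> 'a rel \<Rightarrow> bool" where
  "order_embeds s A r \<longleftrightarrow>
     (\<exists>g. g ` Field s \<subseteq> A \<and> inj_on g (Field s) \<and>
          (\<forall>x\<in>Field s. \<forall>y\<in>Field s. (x, y) \<in> s \<longleftrightarrow> (g x, g y) \<in> r))"

definition bool_order :: "('b::boolean_algebra) rel" where
  "bool_order = {(x, y). x \<le> y}"

definition depth_le :: "'k rel \<Rightarrow> ('b::boolean_algebra) itself \<Rightarrow> bool" where
  "depth_le k _ \<longleftrightarrow>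
     (\<forall>W :: 'b set. Well_order (Restr bool_order W) \<longrightarrow> (card_of W, k) \<in> ordLeq)"

end

theory Submission imports Defs begin
unbundle cardinal_syntax

lemma wo_facts:
  assumes "Well_order W"
  shows "\<forall>x\<in>Field W. (x,x)\<in>W" "trans W" "antisym W"
    "\<forall>x\<in>Field W. \<forall>y\<in>Field W. (x,y)\<in>W \<or> (y,x)\<in>W"
  using assms unfolding well_order_on_def linear_order_on_def partial_order_on_def
    preorder_on_def refl_on_def total_on_def by (auto, metis)

lemma wo_least:
  assumes "Well_order W" "B \<subseteq> Field W" "B \<noteq> {}"
  shows "\<exists>m\<in>B. \<forall>b\<in>B. (m,b)\<in>W"
  using assms wo_rel.minim_in wo_rel.minim_least unfolding wo_rel_def by metis

lemma finite_ordLess_inf: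
  assumes "Card_order k" "infinite (Field k)" "finite X"
  shows "|X| <o k"
  using assms finite_ordLess_infinite[of "|X|" k] card_of_Well_order
  by (metis Field_card_of card_order_on_well_order_on)

lemma nat_ordLeq:
  assumes "Card_order k" "infinite (Field k)"
  shows "|UNIV::nat set| \<le>o k"
  using assms infinite_iff_card_of_nat card_of_Field_ordIso ordLeq_ordIso_trans by blast

lemma core:
  fixes k :: "'k rel" and mu :: "'m rel" and W :: "'i rel" and g :: "'i \<Rightarrow> 'a"
  assumes k: "Card_order k" "infinite (Field k)"
    and mu: "Card_order mu" "stable mu" "infinite (Field mu)" "mu \<le>o k"
    and W: "Well_order W" and JW: "J \<subseteq> Field W"
    and po: "partial_order_on A r"
    and gA: "g ` J \<subseteq> A"
    and iso: "\<forall>x\<in>J. \<forall>y\<in>J. (x,y)\<in>W \<longleftrightarrow> (g x, g y) \<in> r"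
    and fA: "\<forall>a\<in>A. f a \<subseteq> A \<and> |f a| <o k"
    and fn: "\<forall>a\<in>A. \<forall>b\<in>A. (a, b) \<in> r \<longrightarrow> (\<exists>c \<in> f a \<inter> f b. (a, c) \<in> r \<and> (c, b) \<in> r)"
    and bnd: "\<forall>Z\<subseteq>J. |Z| \<le>o k \<longrightarrow> (\<exists>\<beta>\<in>J. \<forall>\<alpha>\<in>Z. (\<alpha>,\<beta>)\<in>W \<and> \<alpha>\<noteq>\<beta>)"
    and segs: "\<forall>\<beta>\<in>J. |{\<alpha>\<in>J. (\<alpha>,\<beta>)\<in>W \<and> \<alpha>\<noteq>\<beta>}| \<le>o k"
    and fmu: "\<forall>\<alpha>\<in>J. |f (g \<alpha>)| <o mu"
  shows False
proof -
  note wf = wo_facts[OF W]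
  have reflA: "\<forall>x\<in>A. (x,x)\<in>r" and transr: "trans r" and antir: "antisym r"
    using po unfolding partial_order_on_def preorder_on_def refl_on_def by auto
  define lt where "lt = (\<lambda>\<alpha> \<beta>. (\<alpha>,\<beta>)\<in>W \<and> \<alpha>\<noteq>\<beta>)"
  define L where "L = (\<lambda>\<beta>. {\<alpha>\<in>J. lt \<alpha> \<beta>})"
  have ltW: "lt a b \<Longrightarrow> (a,b)\<in>W" for a b unfolding lt_def by auto
  have lt_trans: "lt a b \<Longrightarrow> lt b c \<Longrightarrow> lt a c" for a b c
    using wf(2,3) unfolding lt_def trans_def antisym_def by blast
  have le_lt: "(a,b)\<in>W \<Longrightarrow> lt b c \<Longrightarrow> lt a c" for a b c
    using wf(2,3) unfolding lt_def trans_def antisym_def by blast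
  have lt_le: "lt a b \<Longrightarrow> (b,c)\<in>W \<Longrightarrow> lt a c" for a b c
    using wf(2,3) unfolding lt_def trans_def antisym_def by blast
  have tot: "a\<in>J \<Longrightarrow> b\<in>J \<Longrightarrow> (a,b)\<in>W \<or> lt b a" for a b
    using wf(1,4) JW unfolding lt_def by blast
  have lt_irr: "\<not> lt a a" for a unfolding lt_def by auto
  have bnd': "\<exists>\<beta>\<in>J. \<forall>\<alpha>\<in>Z. lt \<alpha> \<beta>" if "Z \<subseteq> J" "|Z| \<le>o k" for Z
    using bnd that unfolding lt_def by blast
  have injg: "inj_on g J"
  proof (rule inj_onI)
    fix x y assume "x\<in>J" "y\<in>J" "g x = g y"
    then have "(x,y)\<in>W" "(y,x)\<in>W" using iso reflA gA by auto
    then show "x = y" using wf(3) unfolding antisym_def by blast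
  qed
  have kinf: "\<not> finite (Field k)" using k by auto
  define closed where "closed = (\<lambda>S. (\<forall>s\<in>S. f s \<subseteq> S) \<and>
     (\<forall>s\<in>S. (\<exists>\<alpha>\<in>J. (g \<alpha>, s)\<notin>r) \<longrightarrow> (\<exists>\<alpha>\<in>J. g \<alpha> \<in> S \<and> (g \<alpha>, s)\<notin>r)))"
  define Good where "Good = (\<lambda>\<beta>. \<beta>\<in>J \<and> (\<exists>S. closed S \<and> g ` L \<beta> \<subseteq> S \<and> (\<forall>\<alpha>\<in>J. g \<alpha> \<in> S \<longrightarrow> lt \<alpha> \<beta>)))"
  have closed_UN: "(\<And>i. i\<in>I \<Longrightarrow> closed (S i)) \<Longrightarrow> closed (\<Union>i\<in>I. S i)" for I and S :: "'x \<Rightarrow> 'a set"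
  proof -
    assume H: "\<And>i. i\<in>I \<Longrightarrow> closed (S i)"
    show "closed (\<Union>i\<in>I. S i)" unfolding closed_def
    proof (intro conjI ballI impI)
      fix s assume "s \<in> (\<Union>i\<in>I. S i)"
      then obtain i where i: "i\<in>I" "s\<in>S i" by blast
      then show "f s \<subseteq> (\<Union>i\<in>I. S i)" using H[OF i(1)] unfolding closed_def by blast
      assume "\<exists>\<alpha>\<in>J. (g \<alpha>, s)\<notin>r"
      then obtain \<alpha> where "\<alpha>\<in>J" "g \<alpha> \<in> S i" "(g \<alpha>, s)\<notin>r"
        using H[OF i(1)] i(2) unfolding closed_def by blast
      then show "\<exists>\<alpha>\<in>J. g \<alpha> \<in> (\<Union>i\<in>I. S i) \<and> (g \<alpha>, s)\<notin>r" using i(1) by blast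
    qed
  qed
  have closure: "\<exists>S. X \<subseteq> S \<and> S \<subseteq> A \<and> closed S \<and> |S| \<le>o k" if "X \<subseteq> A" "|X| \<le>o k" for X
  proof -
    define w where "w = (\<lambda>s. SOME \<alpha>. \<alpha>\<in>J \<and> (g \<alpha>, s)\<notin>r)"
    have w: "\<exists>\<alpha>\<in>J. (g \<alpha>, s)\<notin>r \<Longrightarrow> w s \<in> J \<and> (g (w s), s)\<notin>r" for s
      unfolding w_def by (rule someI_ex) blast
    define F where "F = (\<lambda>Y. Y \<union> (\<Union>y\<in>Y. f y) \<union> (g \<circ> w) ` {s\<in>Y. \<exists>\<alpha>\<in>J. (g \<alpha>, s)\<notin>r})"
    have step: "F Y \<subseteq> A \<and> |F Y| \<le>o k" if Y: "Y \<subseteq> A" "|Y| \<le>o k" for Y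
    proof
      show "F Y \<subseteq> A" unfolding F_def using Y fA gA by (auto; metis image_subset_iff w)
      have 1: "|\<Union>y\<in>Y. f y| \<le>o k"
        using card_of_UNION_ordLeq_infinite_Field[OF kinf k(1) Y(2)] fA Y(1) ordLess_imp_ordLeq by blast
      have 2: "|(g \<circ> w) ` {s\<in>Y. \<exists>\<alpha>\<in>J. (g \<alpha>, s)\<notin>r}| \<le>o k"
      proof -
        have "|(g \<circ> w) ` {s\<in>Y. \<exists>\<alpha>\<in>J. (g \<alpha>, s)\<notin>r}| \<le>o |{s\<in>Y. \<exists>\<alpha>\<in>J. (g \<alpha>, s)\<notin>r}|"
          by (rule card_of_image)
        moreover have "|{s\<in>Y. \<exists>\<alpha>\<in>J. (g \<alpha>, s)\<notin>r}| \<le>o |Y|" by (rule card_of_mono1) blast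
        ultimately show ?thesis using Y(2) ordLeq_transitive by blast
      qed
      have 3: "|Y \<union> (\<Union>y\<in>Y. f y)| \<le>o k" by (rule card_of_Un_ordLeq_infinite_Field[OF kinf Y(2) 1 k(1)])
      show "|F Y| \<le>o k" unfolding F_def by (rule card_of_Un_ordLeq_infinite_Field[OF kinf 3 2 k(1)])
    qed
    define Y where "Y = (\<lambda>n. (F ^^ n) X)"
    have Yn: "Y n \<subseteq> A \<and> |Y n| \<le>o k" for n
      by (induction n) (simp_all add: Y_def step that)
    define S where "S = (\<Union>n. Y n)"
    have "|S| \<le>o k" unfolding S_def
      using card_of_UNION_ordLeq_infinite_Field[OF kinf k(1) nat_ordLeq[OF k]] Yn by blast
    moreover have "X \<subseteq> S" unfolding S_def Y_def by (metis UN_upper UNIV_I funpow_0)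
    moreover have "S \<subseteq> A" unfolding S_def using Yn by blast
    moreover have "closed S" unfolding closed_def
    proof (intro conjI ballI impI)
      fix s assume "s\<in>S"
      then obtain n where n: "s \<in> Y n" unfolding S_def by blast
      have YS: "Y (Suc n) = F (Y n)" unfolding Y_def by simp
      show "f s \<subseteq> S" using n YS unfolding S_def F_def by blast
    next
      fix s assume "s\<in>S"
      then obtain n where n: "s \<in> Y n" unfolding S_def by blast
      have YS: "Y (Suc n) = F (Y n)" unfolding Y_def by simp
      assume "\<exists>\<alpha>\<in>J. (g \<alpha>, s)\<notin>r"
      then have "w s \<in> J" "(g (w s), s)\<notin>r" "g (w s) \<in> Y (Suc n)"
        using w[of s] n YS unfolding F_def by auto
      then show "\<exists>\<alpha>\<in>J. g \<alpha> \<in> S \<and> (g \<alpha>, s)\<notin>r" unfolding S_def by blast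
    qed
    ultimately show ?thesis by blast
  qed
  have unbounded: "\<exists>\<beta>. Good \<beta> \<and> (\<gamma>,\<beta>)\<in>W" if "\<gamma>\<in>J" for \<gamma>
  proof -
    define cl where "cl = (\<lambda>y. SOME S. g ` L y \<subseteq> S \<and> S \<subseteq> A \<and> closed S \<and> |S| \<le>o k)"
    have cl: "g ` L y \<subseteq> cl y \<and> cl y \<subseteq> A \<and> closed (cl y) \<and> |cl y| \<le>o k" if "y\<in>J" for y
    proof -
      have "|L y| \<le>o k" using segs that unfolding L_def lt_def by blast
      then have "|g ` L y| \<le>o k" using card_of_image ordLeq_transitive by blast
      moreover have "g ` L y \<subseteq> A" using gA unfolding L_def by blast
      ultimately have "\<exists>S. g ` L y \<subseteq> S \<and> S \<subseteq> A \<and> closed S \<and> |S| \<le>o k" using closure by blast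
      then show ?thesis unfolding cl_def by (rule someI_ex)
    qed
    define nxt where "nxt = (\<lambda>y. SOME y'. y'\<in>J \<and> (\<forall>\<alpha>\<in>J. (g \<alpha> \<in> cl y \<or> \<alpha> = y) \<longrightarrow> lt \<alpha> y'))"
    have nxt: "nxt y \<in> J \<and> (\<forall>\<alpha>\<in>J. (g \<alpha> \<in> cl y \<or> \<alpha> = y) \<longrightarrow> lt \<alpha> (nxt y))" if "y\<in>J" for y
    proof -
      define Z0 where "Z0 = {\<alpha>\<in>J. g \<alpha> \<in> cl y}"
      have "inj_on g Z0" using injg unfolding Z0_def by (rule inj_on_subset) blast
      then have "|Z0| \<le>o |cl y|" using card_of_ordLeq[of Z0 "cl y"] unfolding Z0_def by blast
      then have 1: "|Z0| \<le>o k" using cl[OF that] ordLeq_transitive by blast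
      have 2: "|{y}| \<le>o k" using finite_ordLess_inf[OF k] ordLess_imp_ordLeq by blast
      have "|Z0 \<union> {y}| \<le>o k" using card_of_Un_ordLeq_infinite_Field[OF kinf 1 2 k(1)] .
      moreover have "Z0 \<union> {y} \<subseteq> J" using that unfolding Z0_def by blast
      ultimately obtain \<beta> where "\<beta>\<in>J" "\<forall>\<alpha>\<in>Z0 \<union> {y}. lt \<alpha> \<beta>" using bnd'[of "Z0 \<union> {y}"] by blast
      then have "\<exists>y'. y'\<in>J \<and> (\<forall>\<alpha>\<in>J. (g \<alpha> \<in> cl y \<or> \<alpha> = y) \<longrightarrow> lt \<alpha> y')"
        unfolding Z0_def by blast
      then show ?thesis unfolding nxt_def by (rule someI_ex)
    qed
    define ys where "ys = (\<lambda>n. (nxt ^^ n) \<gamma>)"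
    have ysJ: "ys n \<in> J" for n by (induction n) (simp_all add: ys_def that nxt)
    have ysS: "ys (Suc n) = nxt (ys n)" for n unfolding ys_def by simp
    have ysn: "\<forall>\<alpha>\<in>J. (g \<alpha> \<in> cl (ys n) \<or> \<alpha> = ys n) \<longrightarrow> lt \<alpha> (ys (Suc n))" for n
      using nxt[OF ysJ[of n]] ysS by simp
    have "|range ys| \<le>o k" using card_of_image nat_ordLeq[OF k] ordLeq_transitive by blast
    moreover have "range ys \<subseteq> J" using ysJ by blast
    ultimately obtain \<beta> where "\<beta>\<in>J" "\<forall>n. lt (ys n) \<beta>" using bnd'[of "range ys"] by blast
    define B where "B = {\<beta>\<in>J. \<forall>n. lt (ys n) \<beta>}"
    have "B \<noteq> {}" "B \<subseteq> Field W" using \<open>\<beta>\<in>J\<close> \<open>\<forall>n. lt (ys n) \<beta>\<close> JW unfolding B_def by auto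
    then obtain \<delta> where \<delta>: "\<delta>\<in>B" "\<forall>b\<in>B. (\<delta>,b)\<in>W" using wo_least[OF W] by blast
    define S where "S = (\<Union>n. cl (ys n))"
    have "closed S" unfolding S_def by (rule closed_UN) (use cl ysJ in blast)
    moreover have "g ` L \<delta> \<subseteq> S"
    proof
      fix x assume "x \<in> g ` L \<delta>"
      then obtain \<alpha> where \<alpha>: "\<alpha>\<in>J" "lt \<alpha> \<delta>" "x = g \<alpha>" unfolding L_def by blast
      have "\<exists>n. \<not> lt (ys n) \<alpha>"
      proof (rule ccontr)
        assume "\<not> ?thesis"
        then have "\<alpha>\<in>B" using \<alpha> unfolding B_def by blast
        then have "(\<delta>,\<alpha>)\<in>W" using \<delta> by blast
        then show False using le_lt[OF _ \<alpha>(2)] lt_irr by blast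
      qed
      then obtain n where "\<not> lt (ys n) \<alpha>" by blast
      then have "(\<alpha>, ys n)\<in>W" using tot[OF \<alpha>(1) ysJ[of n]] by blast
      then have "lt \<alpha> (ys (Suc n))" using le_lt ysn ysJ by blast
      then have "\<alpha> \<in> L (ys (Suc n))" using \<alpha> unfolding L_def by blast
      then show "x \<in> S" using cl[OF ysJ[of "Suc n"]] \<alpha>(3) unfolding S_def by blast
    qed
    moreover have "\<forall>\<alpha>\<in>J. g \<alpha> \<in> S \<longrightarrow> lt \<alpha> \<delta>"
    proof (intro ballI impI)
      fix \<alpha> assume "\<alpha>\<in>J" "g \<alpha> \<in> S"
      then obtain n where "g \<alpha> \<in> cl (ys n)" unfolding S_def by blast
      then have "lt \<alpha> (ys (Suc n))" using ysn \<open>\<alpha>\<in>J\<close> by blast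
      moreover have "lt (ys (Suc n)) \<delta>" using \<delta>(1) unfolding B_def by blast
      ultimately show "lt \<alpha> \<delta>" using lt_trans by blast
    qed
    ultimately have "Good \<delta>" using \<delta>(1) unfolding Good_def B_def by blast
    moreover have "lt (ys 0) \<delta>" using \<delta>(1) unfolding B_def by blast
    moreover have "ys 0 = \<gamma>" unfolding ys_def by simp
    ultimately show ?thesis using ltW by blast
  qed
  have limit: "Good \<delta>" if dJ: "\<delta>\<in>J" and cof: "\<forall>\<alpha>\<in>J. lt \<alpha> \<delta> \<longrightarrow> (\<exists>e. Good e \<and> lt \<alpha> e \<and> lt e \<delta>)" for \<delta>
  proof -
    define Sf where "Sf = (\<lambda>e. SOME S. closed S \<and> g ` L e \<subseteq> S \<and> (\<forall>\<alpha>\<in>J. g \<alpha> \<in> S \<longrightarrow> lt \<alpha> e))"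
    have Sf: "closed (Sf e) \<and> g ` L e \<subseteq> Sf e \<and> (\<forall>\<alpha>\<in>J. g \<alpha> \<in> Sf e \<longrightarrow> lt \<alpha> e)" if "Good e" for e
    proof -
      have "\<exists>S. closed S \<and> g ` L e \<subseteq> S \<and> (\<forall>\<alpha>\<in>J. g \<alpha> \<in> S \<longrightarrow> lt \<alpha> e)"
        using that unfolding Good_def by blast
      then show ?thesis unfolding Sf_def by (rule someI_ex)
    qed
    define S where "S = (\<Union>e\<in>{e. Good e \<and> lt e \<delta>}. Sf e)"
    have "closed S" unfolding S_def by (rule closed_UN) (use Sf in blast)
    moreover have "g ` L \<delta> \<subseteq> S"
    proof
      fix x assume "x \<in> g ` L \<delta>"
      then obtain \<alpha> where \<alpha>: "\<alpha>\<in>J" "lt \<alpha> \<delta>" "x = g \<alpha>" unfolding L_def by blast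
      then obtain e where e: "Good e" "lt \<alpha> e" "lt e \<delta>" using cof by blast
      then have "x \<in> Sf e" using Sf[OF e(1)] \<alpha> unfolding L_def by blast
      then show "x \<in> S" using e unfolding S_def by blast
    qed
    moreover have "\<forall>\<alpha>\<in>J. g \<alpha> \<in> S \<longrightarrow> lt \<alpha> \<delta>"
      unfolding S_def using Sf lt_trans by blast
    ultimately show ?thesis using dJ unfolding Good_def by blast
  qed
  define E where "E = {\<beta>. Good \<beta>}"
  have EJ: "E \<subseteq> J" unfolding E_def Good_def by blast
  have kW: "Well_order k" using k(1) card_order_on_well_order_on by blast
  have notE: "\<not> |E| \<le>o k"
  proof
    assume "|E| \<le>o k"
    then obtain \<beta> where \<beta>: "\<beta>\<in>J" "\<forall>e\<in>E. lt e \<beta>" using bnd'[OF EJ] by blast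
    obtain \<beta>' where "Good \<beta>'" "(\<beta>,\<beta>')\<in>W" using unbounded[OF \<beta>(1)] by blast
    then show False using \<beta>(2) le_lt lt_irr unfolding E_def by blast
  qed
  then have "k <o |E|" using not_ordLeq_iff_ordLess[OF kW card_of_Well_order] by blast
  then have "mu \<le>o |E|" using mu(4) ordLeq_ordLess_trans ordLess_imp_ordLeq by blast
  then have "|Field mu| \<le>o |E|" using card_of_Field_ordIso[OF mu(1)] ordIso_ordLeq_trans by blast
  then obtain h where h: "inj_on h (Field mu)" "h ` Field mu \<subseteq> E"
    using card_of_ordLeq[of "Field mu" E, THEN iffD2] by blast
  define Z where "Z = h ` Field mu"
  have "bij_betw h (Field mu) Z" unfolding Z_def using h(1) by (rule inj_on_imp_bij_betw)
  then have "|Field mu| =o |Z|" using card_of_ordIso[of "Field mu" Z, THEN iffD1] by blast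
  then have "|Z| =o |Field mu|" by (rule ordIso_symmetric)
  then have Zmu: "|Z| =o mu" using card_of_Field_ordIso[OF mu(1)] ordIso_transitive by blast
  then have "|Z| \<le>o k" using mu(4) ordIso_ordLeq_trans by blast
  then obtain \<beta>0 where \<beta>0: "\<beta>0\<in>J" "\<forall>\<alpha>\<in>Z. lt \<alpha> \<beta>0" using bnd'[of Z] EJ h(2) unfolding Z_def by blast
  define Q where "Q = {\<beta>\<in>J. \<not> |E \<inter> L \<beta>| <o mu}"
  have "\<beta>0 \<in> Q"
  proof -
    have "Z \<subseteq> E \<inter> L \<beta>0" using \<beta>0 h(2) EJ unfolding Z_def L_def by blast
    then have "|Z| \<le>o |E \<inter> L \<beta>0|" by (rule card_of_mono1)
    then have "\<not> |E \<inter> L \<beta>0| <o mu" using Zmu not_ordLess_ordIso ordLeq_ordLess_trans by blast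
    then show ?thesis unfolding Q_def using \<beta>0 by blast
  qed
  then have "Q \<noteq> {}" "Q \<subseteq> Field W" using JW unfolding Q_def by auto
  then obtain \<delta> where \<delta>: "\<delta>\<in>Q" "\<forall>b\<in>Q. (\<delta>,b)\<in>W" using wo_least[OF W] by blast
  have \<delta>J: "\<delta>\<in>J" and P1: "\<not> |E \<inter> L \<delta>| <o mu" using \<delta>(1) unfolding Q_def by auto
  have muinf: "\<not> finite (Field mu)" using mu(3) by simp
  have P2: "|E \<inter> {\<beta>\<in>J. (\<beta>,\<alpha>)\<in>W}| <o mu" if "\<alpha>\<in>J" "lt \<alpha> \<delta>" for \<alpha>
  proof -
    have "\<alpha> \<notin> Q" using \<delta>(2) that le_lt lt_irr by blast
    then have 1: "|E \<inter> L \<alpha>| <o mu" using that unfolding Q_def by blast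
    have 2: "|{\<alpha>}| <o mu" using finite_ordLess_inf[OF mu(1,3)] by blast
    have "|(E \<inter> L \<alpha>) \<union> {\<alpha>}| <o mu" using card_of_Un_ordLess_infinite_Field[OF muinf mu(1) 1 2] .
    moreover have "E \<inter> {\<beta>\<in>J. (\<beta>,\<alpha>)\<in>W} \<subseteq> (E \<inter> L \<alpha>) \<union> {\<alpha>}" unfolding L_def lt_def by blast
    ultimately show ?thesis using card_of_mono1 ordLeq_ordLess_trans by blast
  qed
  have P3: "\<forall>\<alpha>\<in>J. lt \<alpha> \<delta> \<longrightarrow> (\<exists>e. Good e \<and> lt \<alpha> e \<and> lt e \<delta>)"
  proof (intro ballI impI)
    fix \<alpha> assume a: "\<alpha>\<in>J" "lt \<alpha> \<delta>"
    show "\<exists>e. Good e \<and> lt \<alpha> e \<and> lt e \<delta>"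
    proof (rule ccontr)
      assume "\<not> ?thesis"
      then have "E \<inter> L \<delta> \<subseteq> E \<inter> {\<beta>\<in>J. (\<beta>,\<alpha>)\<in>W}" using tot a(1) unfolding E_def L_def by blast
      then have "|E \<inter> L \<delta>| <o mu" using P2[OF a] card_of_mono1 ordLeq_ordLess_trans by blast
      then show False using P1 by blast
    qed
  qed
  have "Good \<delta>" using limit[OF \<delta>J P3] .
  then obtain S where S: "closed S" "g ` L \<delta> \<subseteq> S" "\<forall>\<alpha>\<in>J. g \<alpha> \<in> S \<longrightarrow> lt \<alpha> \<delta>"
    unfolding Good_def by blast
  have P4: "\<exists>e\<in>L \<delta>. \<forall>z\<in>Z. lt z e" if "Z \<subseteq> L \<delta>" "|Z| <o mu" for Z
  proof -
    define U where "U = (\<Union>z\<in>Z. E \<inter> {\<beta>\<in>J. (\<beta>,z)\<in>W})"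
    have "|U| <o mu" unfolding U_def
      by (rule stable_UNION[OF mu(2) that(2)]) (use P2 that(1) in \<open>auto simp: L_def\<close>)
    then have "\<not> E \<inter> L \<delta> \<subseteq> U" using P1 card_of_mono1 ordLeq_ordLess_trans by blast
    then obtain e where e: "e \<in> E" "e \<in> L \<delta>" "e \<notin> U" by blast
    have "\<forall>z\<in>Z. lt z e"
    proof
      fix z assume "z\<in>Z"
      then have "z\<in>J" "(e,z)\<notin>W" using e that(1) unfolding U_def L_def by auto
      then show "lt z e" using tot e(2) unfolding L_def by blast
    qed
    then show ?thesis using e(2) by blast
  qed
  have g\<delta>: "g \<delta> \<in> A" using gA \<delta>J by blast
  define d where "d = (\<lambda>\<alpha>. SOME c. c \<in> f (g \<alpha>) \<inter> f (g \<delta>) \<and> (g \<alpha>, c)\<in>r \<and> (c, g \<delta>)\<in>r)"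
  have d: "d \<alpha> \<in> f (g \<alpha>) \<inter> f (g \<delta>) \<and> (g \<alpha>, d \<alpha>)\<in>r \<and> (d \<alpha>, g \<delta>)\<in>r" if "\<alpha> \<in> L \<delta>" for \<alpha>
  proof -
    have "\<alpha>\<in>J" "(g \<alpha>, g \<delta>)\<in>r" using that iso \<delta>J ltW unfolding L_def by auto
    then have "\<exists>c. c \<in> f (g \<alpha>) \<inter> f (g \<delta>) \<and> (g \<alpha>, c)\<in>r \<and> (c, g \<delta>)\<in>r"
      using fn g\<delta> gA by blast
    then show ?thesis unfolding d_def by (rule someI_ex)
  qed
  have "\<exists>c\<in>f (g \<delta>). \<forall>\<beta>\<in>L \<delta>. \<exists>\<alpha>\<in>L \<delta>. d \<alpha> = c \<and> (\<beta>,\<alpha>)\<in>W"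
  proof (rule ccontr)
    assume "\<not> ?thesis"
    then have "\<forall>c\<in>f (g \<delta>). \<exists>\<beta>. \<beta>\<in>L \<delta> \<and> (\<forall>\<alpha>\<in>L \<delta>. d \<alpha> = c \<longrightarrow> (\<beta>,\<alpha>)\<notin>W)" by blast
    then obtain bb where bb: "\<forall>c\<in>f (g \<delta>). bb c \<in> L \<delta> \<and> (\<forall>\<alpha>\<in>L \<delta>. d \<alpha> = c \<longrightarrow> (bb c,\<alpha>)\<notin>W)"
      by metis
    have "|bb ` f (g \<delta>)| <o mu" using card_of_image fmu \<delta>J ordLeq_ordLess_trans by blast
    moreover have "bb ` f (g \<delta>) \<subseteq> L \<delta>" using bb by blast
    ultimately obtain e where e: "e\<in>L \<delta>" "\<forall>z\<in>bb ` f (g \<delta>). lt z e" using P4 by blast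
    have "d e \<in> f (g \<delta>)" using d[OF e(1)] by blast
    then have "lt (bb (d e)) e" "(bb (d e), e)\<notin>W" using e bb by auto
    then show False using ltW by blast
  qed
  then obtain c where c: "c\<in>f (g \<delta>)" "\<forall>\<beta>\<in>L \<delta>. \<exists>\<alpha>\<in>L \<delta>. d \<alpha> = c \<and> (\<beta>,\<alpha>)\<in>W" by blast
  have "L \<delta> \<noteq> {}"
  proof
    assume "L \<delta> = {}"
    then have "|E \<inter> L \<delta>| <o mu" using finite_ordLess_inf[OF mu(1,3), of "{}"] by simp
    then show False using P1 by blast
  qed
  then obtain \<beta>1 where "\<beta>1 \<in> L \<delta>" by blast
  then obtain \<alpha>1 where \<alpha>1: "\<alpha>1 \<in> L \<delta>" "d \<alpha>1 = c" using c by blast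
  have "g \<alpha>1 \<in> S" using S(2) \<alpha>1 by blast
  then have cS: "c \<in> S" using S(1) d[OF \<alpha>1(1)] \<alpha>1(2) unfolding closed_def by blast
  have cd: "(c, g \<delta>)\<in>r" using d[OF \<alpha>1(1)] \<alpha>1(2) by blast
  have cne: "c \<noteq> g \<delta>"
  proof
    assume "c = g \<delta>"
    then have "g \<delta> \<in> S" using cS by simp
    then have "lt \<delta> \<delta>" using S(3) \<delta>J by blast
    then show False using lt_irr by blast
  qed
  have cub: "(g \<beta>, c)\<in>r" if bL: "\<beta>\<in>L \<delta>" for \<beta>
  proof -
    obtain \<alpha> where \<alpha>: "\<alpha>\<in>L \<delta>" "d \<alpha> = c" "(\<beta>,\<alpha>)\<in>W" using bspec[OF c(2) bL] by auto
    have "\<beta>\<in>J" "\<alpha>\<in>J" using \<alpha>(1) bL unfolding L_def by auto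
    then have "(g \<beta>, g \<alpha>)\<in>r" using iso \<alpha>(3) by blast
    moreover have "(g \<alpha>, c)\<in>r" using d[OF \<alpha>(1)] \<alpha>(2) by blast
    ultimately show ?thesis using transr unfolding trans_def by blast
  qed
  have call: "\<forall>\<alpha>\<in>J. (g \<alpha>, c)\<in>r"
  proof (rule ccontr)
    assume "\<not> ?thesis"
    then obtain \<alpha> where "\<alpha>\<in>J" "g \<alpha> \<in> S" "(g \<alpha>, c)\<notin>r" using S(1) cS unfolding closed_def by blast
    then show False using S(3) cub unfolding L_def by blast
  qed
  have "|{\<delta>}| \<le>o k" using finite_ordLess_inf[OF k] ordLess_imp_ordLeq by blast
  then obtain \<beta> where \<beta>: "\<beta>\<in>J" "lt \<delta> \<beta>" using bnd'[of "{\<delta>}"] \<delta>J by blast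
  have "(g \<delta>, g \<beta>)\<in>r" using iso \<beta> \<delta>J ltW by blast
  then have "(g \<delta>, c)\<in>r" using call \<beta>(1) transr unfolding trans_def by blast
  then show False using cd cne antir unfolding antisym_def by blast
qed


lemma no_emb:
  fixes k :: "'k rel" and g :: "'k set \<Rightarrow> 'a"
  assumes k: "Card_order k" "infinite (Field k)" and po: "partial_order_on A r" and FN: "FN k A r"
    and gA: "g ` Field (cardSuc k) \<subseteq> A"
    and iso: "\<forall>x\<in>Field (cardSuc k). \<forall>y\<in>Field (cardSuc k). (x,y)\<in>cardSuc k \<longleftrightarrow> (g x, g y)\<in>r"
  shows False
proof -
  obtain f where fA: "\<forall>a\<in>A. f a \<subseteq> A \<and> |f a| <o k"
    and fn: "\<forall>a\<in>A. \<forall>b\<in>A. (a, b) \<in> r \<longrightarrow> (\<exists>c \<in> f a \<inter> f b. (a, c) \<in> r \<and> (c, b) \<in> r)"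
    using FN unfolding FN_def by blast
  define W where "W = cardSuc k"
  have W: "Well_order W" unfolding W_def using cardSuc_Well_order[OF k(1)] .
  have WC: "Card_order W" unfolding W_def using cardSuc_Card_order[OF k(1)] .
  have Winf: "\<not> finite (Field W)" unfolding W_def using cardSuc_finite[OF k(1)] k(2) by simp
  have kinf: "\<not> finite (Field k)" using k by simp
  have reg: "regularCard W" unfolding W_def using infinite_cardSuc_regularCard[OF kinf k(1)] .
  have kW: "Well_order k" using k(1) card_order_on_well_order_on by blast
  note wf = wo_facts[OF W]
  have bndI: "\<forall>Z\<subseteq>Field W. |Z| \<le>o k \<longrightarrow> (\<exists>\<beta>\<in>Field W. \<forall>\<alpha>\<in>Z. (\<alpha>,\<beta>)\<in>W \<and> \<alpha>\<noteq>\<beta>)"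
  proof (intro allI impI)
    fix Z assume Z: "Z \<subseteq> Field W" "|Z| \<le>o k"
    have "|Z| <o W" using Z(2) cardSuc_ordLeq_ordLess[OF k(1) card_of_Card_order, of Z] unfolding W_def by simp
    then have "\<not> cofinal Z W" using reg Z(1) not_ordLess_ordIso unfolding regularCard_def by blast
    then obtain a where a: "a\<in>Field W" "\<forall>b\<in>Z. \<not>(a\<noteq>b \<and> (a,b)\<in>W)" unfolding cofinal_def by blast
    have "Field W \<noteq> under W a" using Card_order_infinite_not_under[OF WC Winf] by blast
    moreover have "under W a \<subseteq> Field W" unfolding under_def Field_def by blast
    ultimately obtain b where b: "b\<in>Field W" "(b,a)\<notin>W" unfolding under_def by blast
    have ab1: "(a,b)\<in>W" using wf(4) a(1) b by blast
    have ab2: "a \<noteq> b" using wf(1) a(1) b(2) by blast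
    note ab = ab1 ab2
    have "\<forall>\<alpha>\<in>Z. (\<alpha>,b)\<in>W \<and> \<alpha>\<noteq>b"
    proof
      fix \<alpha> assume "\<alpha>\<in>Z"
      then have aF: "\<alpha> \<in> Field W" and na: "\<not>(a\<noteq>\<alpha> \<and> (a,\<alpha>)\<in>W)" using a(2) Z(1) by auto
      have "(\<alpha>,a)\<in>W"
      proof (cases "\<alpha> = a")
        case True then show ?thesis using wf(1) aF by simp
      next
        case False then have "(a,\<alpha>)\<notin>W" using na by blast
        then show ?thesis using wf(4) aF a(1) by blast
      qed
      then show "(\<alpha>,b)\<in>W \<and> \<alpha>\<noteq>b" using ab b(2) wf(2) unfolding trans_def by blast
    qed
    then show "\<exists>\<beta>\<in>Field W. \<forall>\<alpha>\<in>Z. (\<alpha>,\<beta>)\<in>W \<and> \<alpha>\<noteq>\<beta>" using b(1) by blast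
  qed
  have segI: "\<forall>\<beta>\<in>Field W. |{\<alpha>\<in>Field W. (\<alpha>,\<beta>)\<in>W \<and> \<alpha>\<noteq>\<beta>}| \<le>o k"
  proof
    fix \<beta> assume "\<beta>\<in>Field W"
    then have "|underS W \<beta>| <o W" by (rule card_of_underS[OF WC])
    then have u: "|underS W \<beta>| \<le>o k" using cardSuc_ordLeq_ordLess[OF k(1) card_of_Card_order] unfolding W_def by blast
    have s: "{\<alpha>\<in>Field W. (\<alpha>,\<beta>)\<in>W \<and> \<alpha>\<noteq>\<beta>} \<subseteq> underS W \<beta>" unfolding underS_def by blast
    show "|{\<alpha>\<in>Field W. (\<alpha>,\<beta>)\<in>W \<and> \<alpha>\<noteq>\<beta>}| \<le>o k" by (rule ordLeq_transitive[OF card_of_mono1[OF s] u])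
  qed
  have gA': "g ` Field W \<subseteq> A" and iso': "\<forall>x\<in>Field W. \<forall>y\<in>Field W. (x,y)\<in>W \<longleftrightarrow> (g x, g y)\<in>r"
    using gA iso unfolding W_def by auto
  show False
  proof (cases "stable k")
    case True
    have "\<forall>\<alpha>\<in>Field W. |f (g \<alpha>)| <o k" using fA gA' by blast
    then show False
      using core[OF k k(1) True k(2) ordLeq_reflexive[OF kW] W subset_refl po gA' iso' fA fn bndI segI] by blast
  next
    case False
    have natk: "|UNIV::nat set| <o k"
    proof -
      have "|UNIV::nat set| \<le>o k" using nat_ordLeq[OF k] .
      moreover have "\<not> |UNIV::nat set| =o k"
      proof
        assume "|UNIV::nat set| =o k"
        then have "k =o natLeq" using card_of_nat ordIso_symmetric ordIso_transitive by blast
        then show False using False stable_ordIso1[OF stable_natLeq] by blast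
      qed
      ultimately show ?thesis using ordLeq_iff_ordLess_or_ordIso by blast
    qed
    have sz: "\<exists>a\<in>Field k. |f (g \<alpha>)| \<le>o |underS k a|" if "\<alpha>\<in>Field W" for \<alpha>
    proof -
      have "|f (g \<alpha>)| <o k" using fA gA' that by blast
      then obtain a where a: "a\<in>Field k" "|f (g \<alpha>)| =o Restr k (underS k a)"
        using ordLess_iff_ordIso_Restr[OF kW card_of_Well_order] by blast
      have "|Field |f (g \<alpha>)|| =o |Field (Restr k (underS k a))|" using card_of_cong[OF a(2)] .
      then have "|f (g \<alpha>)| =o |Field (Restr k (underS k a))|" by (simp add: Field_card_of)
      moreover have "|Field (Restr k (underS k a))| \<le>o |underS k a|" by (rule card_of_mono1[OF Field_Restr_subset])
      ultimately show ?thesis using a(1) ordIso_ordLeq_trans by blast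
    qed
    define D where "D = (\<lambda>a. {\<alpha>\<in>Field W. |f (g \<alpha>)| \<le>o |underS k a|})"
    have "\<exists>a\<in>Field k. \<forall>\<beta>\<in>Field W. \<exists>\<alpha>\<in>D a. (\<beta>,\<alpha>)\<in>W"
    proof (rule ccontr)
      assume "\<not> ?thesis"
      then have H: "\<forall>a\<in>Field k. \<exists>\<beta>\<in>Field W. \<forall>\<alpha>\<in>D a. (\<beta>,\<alpha>)\<notin>W" by blast
      have Dk: "|D a| \<le>o k" if aK: "a\<in>Field k" for a
      proof -
        obtain \<beta> where \<beta>: "\<beta>\<in>Field W" "\<forall>\<alpha>\<in>D a. (\<beta>,\<alpha>)\<notin>W" using bspec[OF H aK] by blast
        have "D a \<subseteq> {\<alpha>\<in>Field W. (\<alpha>,\<beta>)\<in>W \<and> \<alpha>\<noteq>\<beta>}"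
        proof
          fix \<alpha> assume "\<alpha> \<in> D a"
          then have "\<alpha>\<in>Field W" "(\<beta>,\<alpha>)\<notin>W" using \<beta> unfolding D_def by auto
          then have "(\<alpha>,\<beta>)\<in>W" using wf(4) \<beta>(1) by blast
          moreover have "\<alpha>\<noteq>\<beta>" using wf(1) \<beta>(1) \<open>(\<beta>,\<alpha>)\<notin>W\<close> by blast
          ultimately show "\<alpha> \<in> {\<alpha>\<in>Field W. (\<alpha>,\<beta>)\<in>W \<and> \<alpha>\<noteq>\<beta>}" using \<open>\<alpha>\<in>Field W\<close> by blast
        qed
        then have "|D a| \<le>o |{\<alpha>\<in>Field W. (\<alpha>,\<beta>)\<in>W \<and> \<alpha>\<noteq>\<beta>}|" by (rule card_of_mono1)
        moreover have "|{\<alpha>\<in>Field W. (\<alpha>,\<beta>)\<in>W \<and> \<alpha>\<noteq>\<beta>}| \<le>o k" using segI \<beta>(1) by blast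
        ultimately show ?thesis by (rule ordLeq_transitive)
      qed
      have FW: "Field W = (\<Union>a\<in>Field k. D a)" using sz unfolding D_def by auto
      have fk: "|Field k| \<le>o k" using card_of_Field_ordIso[OF k(1)] ordIso_iff_ordLeq by blast
      have "|\<Union>a\<in>Field k. D a| \<le>o k"
        by (rule card_of_UNION_ordLeq_infinite_Field[OF kinf k(1) fk]) (use Dk in blast)
      then have "|Field W| \<le>o k" unfolding FW .
      then obtain \<beta> where "\<beta>\<in>Field W" "\<forall>\<alpha>\<in>Field W. (\<alpha>,\<beta>)\<in>W \<and> \<alpha>\<noteq>\<beta>" using bndI by blast
      then show False by blast
    qed
    then obtain a where a: "a\<in>Field k" "\<forall>\<beta>\<in>Field W. \<exists>\<alpha>\<in>D a. (\<beta>,\<alpha>)\<in>W" by blast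
    define J where "J = D a"
    define nu where "nu = |underS k a <+> (UNIV::nat set)|"
    define mu where "mu = cardSuc nu"
    have nuC: "Card_order nu" unfolding nu_def by (rule card_of_Card_order)
    have nuinf: "\<not> finite (Field nu)" unfolding nu_def Field_card_of by simp
    have muC: "Card_order mu" unfolding mu_def by (rule cardSuc_Card_order[OF nuC])
    have muinf: "infinite (Field mu)" unfolding mu_def using cardSuc_finite[OF nuC] nuinf by simp
    have mus: "stable mu" unfolding mu_def
      using regularCard_stable[OF cardSuc_Card_order[OF nuC] _ infinite_cardSuc_regularCard[OF nuinf nuC]]
        muinf mu_def by blast
    have "nu <o k" unfolding nu_def
      by (rule card_of_Plus_ordLess_infinite_Field[OF kinf k(1) card_of_underS[OF k(1) a(1)] natk])
    then have muk: "mu \<le>o k" unfolding mu_def using cardSuc_least[OF nuC k(1)] by blast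
    have JW: "J \<subseteq> Field W" unfolding J_def D_def by blast
    have gJ: "g ` J \<subseteq> A" using gA' JW by blast
    have isoJ: "\<forall>x\<in>J. \<forall>y\<in>J. (x,y)\<in>W \<longleftrightarrow> (g x, g y)\<in>r" using iso' JW by blast
    have bndJ: "\<forall>Z\<subseteq>J. |Z| \<le>o k \<longrightarrow> (\<exists>\<beta>\<in>J. \<forall>\<alpha>\<in>Z. (\<alpha>,\<beta>)\<in>W \<and> \<alpha>\<noteq>\<beta>)"
    proof (intro allI impI)
      fix Z assume Z: "Z \<subseteq> J" "|Z| \<le>o k"
      then obtain \<beta> where \<beta>: "\<beta>\<in>Field W" "\<forall>\<alpha>\<in>Z. (\<alpha>,\<beta>)\<in>W \<and> \<alpha>\<noteq>\<beta>" using bndI JW by blast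
      then obtain \<gamma> where \<gamma>: "\<gamma>\<in>J" "(\<beta>,\<gamma>)\<in>W" using a(2) unfolding J_def by blast
      have "\<forall>\<alpha>\<in>Z. (\<alpha>,\<gamma>)\<in>W \<and> \<alpha>\<noteq>\<gamma>"
      proof
        fix \<alpha> assume "\<alpha>\<in>Z"
        then have "(\<alpha>,\<beta>)\<in>W" "\<alpha>\<noteq>\<beta>" using \<beta> by auto
        then show "(\<alpha>,\<gamma>)\<in>W \<and> \<alpha>\<noteq>\<gamma>" using \<gamma>(2) wf(2,3) unfolding trans_def antisym_def by blast
      qed
      then show "\<exists>\<beta>\<in>J. \<forall>\<alpha>\<in>Z. (\<alpha>,\<beta>)\<in>W \<and> \<alpha>\<noteq>\<beta>" using \<gamma>(1) by blast
    qed
    have segJ: "\<forall>\<beta>\<in>J. |{\<alpha>\<in>J. (\<alpha>,\<beta>)\<in>W \<and> \<alpha>\<noteq>\<beta>}| \<le>o k"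
    proof
      fix \<beta> assume "\<beta>\<in>J"
      then have u: "|{\<alpha>\<in>Field W. (\<alpha>,\<beta>)\<in>W \<and> \<alpha>\<noteq>\<beta>}| \<le>o k" using segI JW by blast
      have s: "{\<alpha>\<in>J. (\<alpha>,\<beta>)\<in>W \<and> \<alpha>\<noteq>\<beta>} \<subseteq> {\<alpha>\<in>Field W. (\<alpha>,\<beta>)\<in>W \<and> \<alpha>\<noteq>\<beta>}" using JW by blast
      show "|{\<alpha>\<in>J. (\<alpha>,\<beta>)\<in>W \<and> \<alpha>\<noteq>\<beta>}| \<le>o k" by (rule ordLeq_transitive[OF card_of_mono1[OF s] u])
    qed
    have fmu: "\<forall>\<alpha>\<in>J. |f (g \<alpha>)| <o mu"
    proof
      fix \<alpha> assume "\<alpha>\<in>J"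
      then have "|f (g \<alpha>)| \<le>o |underS k a|" unfolding J_def D_def by blast
      moreover have "|underS k a| \<le>o nu" unfolding nu_def by (rule card_of_Plus1)
      ultimately have "|f (g \<alpha>)| \<le>o nu" using ordLeq_transitive by blast
      then show "|f (g \<alpha>)| <o mu" unfolding mu_def using cardSuc_ordLeq_ordLess[OF nuC card_of_Card_order] by blast
    qed
    show False using core[OF k muC mus muinf muk W JW po gJ isoJ fA fn bndJ segJ fmu] .
  qed
qed


lemma emb_plus_one:
  assumes "order_embeds (plus_one s) A r"
  shows "\<exists>g. g ` Field s \<subseteq> A \<and> (\<forall>x\<in>Field s. \<forall>y\<in>Field s. (x,y)\<in>s \<longleftrightarrow> (g x, g y)\<in>r)"
proof -
  obtain g where g: "g ` Field (plus_one s) \<subseteq> A"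
    "\<forall>x\<in>Field (plus_one s). \<forall>y\<in>Field (plus_one s). (x, y) \<in> plus_one s \<longleftrightarrow> (g x, g y) \<in> r"
    using assms unfolding order_embeds_def by blast
  have F: "Some x \<in> Field (plus_one s)" if "x \<in> Field s" for x
  proof -
    have "(Some x, None) \<in> plus_one s" using that unfolding plus_one_def by blast
    then show ?thesis unfolding Field_def by blast
  qed
  have P: "(Some x, Some y) \<in> plus_one s \<longleftrightarrow> (x,y)\<in>s" for x y
    unfolding plus_one_def by blast
  show ?thesis
  proof (intro exI conjI)
    show "(g \<circ> Some) ` Field s \<subseteq> A" using g(1) F by auto
    show "\<forall>x\<in>Field s. \<forall>y\<in>Field s. (x,y)\<in>s \<longleftrightarrow> ((g \<circ> Some) x, (g \<circ> Some) y)\<in>r"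
    proof (intro ballI)
      fix x y assume xy: "x\<in>Field s" "y\<in>Field s"
      have "(Some x, Some y) \<in> plus_one s \<longleftrightarrow> (g (Some x), g (Some y)) \<in> r"
        using g(2) F[OF xy(1)] F[OF xy(2)] by blast
      then show "(x,y)\<in>s \<longleftrightarrow> ((g \<circ> Some) x, (g \<circ> Some) y)\<in>r" using P by simp
    qed
  qed
qed

lemma oe_conv:
  assumes "order_embeds (converse s) A r"
  shows "order_embeds s A (converse r)"
  using assms unfolding order_embeds_def by auto

lemma FN_conv:
  assumes "FN k A r"
  shows "FN k A (converse r)"
  using assms unfolding FN_def by (metis (no_types, lifting) Int_commute converse_iff)

lemma part1:
  fixes k :: "'k rel"
  assumes k: "Card_order k" "infinite (Field k)"
    and po: "partial_order_on A r" and oe: "order_embeds (plus_one (cardSuc k)) A r"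
  shows "\<not> FN k A r"
proof
  assume "FN k A r"
  obtain g where "g ` Field (cardSuc k) \<subseteq> A"
    "\<forall>x\<in>Field (cardSuc k). \<forall>y\<in>Field (cardSuc k). (x,y)\<in>cardSuc k \<longleftrightarrow> (g x, g y)\<in>r"
    using emb_plus_one[OF oe] by blast
  then show False using no_emb[OF k po \<open>FN k A r\<close>] by blast
qed

lemma bool_po: "partial_order_on UNIV (bool_order :: ('b::boolean_algebra) rel)"
  unfolding partial_order_on_def preorder_on_def refl_on_def trans_def antisym_def bool_order_def
  by auto

lemma part2:
  fixes k :: "'k rel"
  assumes k: "Card_order k" "infinite (Field k)"
    and FN: "FN k (UNIV :: ('b::boolean_algebra) set) bool_order"
  shows "depth_le k TYPE('b)"
  unfolding depth_le_def
proof (intro allI impI)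
  fix W :: "'b set"
  define R where "R = Restr bool_order W"
  assume "Well_order (Restr bool_order W)"
  then have RW: "Well_order R" unfolding R_def .
  have FR: "Field R = W"
  proof
    show "Field R \<subseteq> W" unfolding R_def by (rule Field_Restr_subset)
    show "W \<subseteq> Field R"
    proof
      fix x assume "x \<in> W"
      then have "(x,x) \<in> R" unfolding R_def bool_order_def by simp
      then show "x \<in> Field R" unfolding Field_def by blast
    qed
  qed
  have kW: "Well_order k" using k(1) card_order_on_well_order_on by blast
  show "|W| \<le>o k"
  proof (rule ccontr)
    assume "\<not> |W| \<le>o k"
    then have "k <o |W|" using not_ordLeq_iff_ordLess[OF kW card_of_Well_order] by blast
    then have 1: "cardSuc k \<le>o |W|" using cardSuc_least[OF k(1) card_of_Card_order] by blast
    have "well_order_on W R" using RW FR by simp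
    then have 2: "|W| \<le>o R" by (rule card_of_least)
    have "cardSuc k \<le>o R" using ordLeq_transitive[OF 1 2] .
    then obtain h where h: "embed (cardSuc k) R h" unfolding ordLeq_def by blast
    have CW: "Well_order (cardSuc k)" using cardSuc_Well_order[OF k(1)] .
    note wf = wo_facts[OF CW]
    have hF: "h ` Field (cardSuc k) \<subseteq> W" using embed_Field[OF h] FR by simp
    have hinj: "inj_on h (Field (cardSuc k))" using embed_inj_on[OF CW h] .
    have hc: "\<And>a b. (a,b)\<in>cardSuc k \<Longrightarrow> (h a, h b)\<in>R" using embed_compat[OF h] unfolding compat_def by blast
    have iso: "\<forall>x\<in>Field (cardSuc k). \<forall>y\<in>Field (cardSuc k). (x,y)\<in>cardSuc k \<longleftrightarrow> (h x, h y)\<in>bool_order"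
    proof (intro ballI iffI)
      fix x y assume "x\<in>Field (cardSuc k)" "y\<in>Field (cardSuc k)" "(x,y)\<in>cardSuc k"
      then show "(h x, h y)\<in>bool_order" using hc unfolding R_def by blast
    next
      fix x y assume xy: "x\<in>Field (cardSuc k)" "y\<in>Field (cardSuc k)" "(h x, h y)\<in>bool_order"
      show "(x,y)\<in>cardSuc k"
      proof (rule ccontr)
        assume n: "(x,y)\<notin>cardSuc k"
        then have "(y,x)\<in>cardSuc k" using wf(4) xy(1,2) by blast
        then have "(h y, h x)\<in>bool_order" using hc unfolding R_def by blast
        then have "h x = h y" using xy(3) unfolding bool_order_def by auto
        then have "x = y" using hinj xy(1,2) unfolding inj_on_def by blast
        then show False using n wf(1) xy(1) by blast
      qed
    qed
    have "h ` Field (cardSuc k) \<subseteq> UNIV" by simp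
    then show False using no_emb[OF k bool_po FN _ iso] by blast
  qed
qed

theorem proposition4p1:
  fixes k :: "'k rel"
  assumes "Card_order k" and "infinite (Field k)"
  shows "(\<forall>(A :: 'a set) r. partial_order_on A r \<longrightarrow>
            (order_embeds (plus_one (cardSuc k)) A r \<or>
             order_embeds (converse (plus_one (cardSuc k))) A r) \<longrightarrow>
            \<not> FN k A r)
       \<and> (FN k (UNIV :: ('b::boolean_algebra) set) bool_order \<longrightarrow> depth_le k TYPE('b))"
proof (intro conjI allI impI)
  fix A :: "'a set" and r
  assume po: "partial_order_on A r"
    and oe: "order_embeds (plus_one (cardSuc k)) A r \<or> order_embeds (converse (plus_one (cardSuc k))) A r"
  show "\<not> FN k A r"
  proof
    assume fn: "FN k A r"
    from oe show False
    proof
      assume "order_embeds (plus_one (cardSuc k)) A r"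
      then show False using part1[OF assms po] fn by blast
    next
      assume "order_embeds (converse (plus_one (cardSuc k))) A r"
      then have "order_embeds (plus_one (cardSuc k)) A (converse r)" by (rule oe_conv)
      moreover have "partial_order_on A (converse r)" using po by simp
      ultimately show False using part1[OF assms] FN_conv[OF fn] by blast
    qed
  qed
next
  assume "FN k (UNIV :: ('b::boolean_algebra) set) bool_order"
  then show "depth_le k TYPE('b)" using part2[OF assms] by blast
qed

end
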